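(* Let $\mathcal{A}$ be a finite alphabet, $\mathbf{p}$ an irreducible pair on $\mathcal{A}$ and $\mathbf{q}$ any pair in the labeled extended Rauzy class of $\mathbf{p}$. Then $\mathcal{P}(\mathbf{q})=\mathcal{P}(\mathbf{p})$.
   Context: Let $n=\#\mathcal{A}$. A pair is $\mathbf{p}=(p_0,p_1)$ with $p_0,p_1:\mathcal{A}\to\{1,\dots,n\}$ bijections. Irreducible: $p_0^{-1}\{1,\dots,k\}\ne p_1^{-1}\{1,\dots,k\}$ for $1\le k<n$. Rauzy move of type $\varepsilon$: $\varepsilon\mathbf{p}=(p'_0,p'_1)$, $p'_\varepsilon=p_\varepsilon$, and for $z=p_\varepsilon^{-1}(n)$, $p'_{1-\varepsilon}(b)=p_{1-\varepsilon}(b)$ if $p_{1-\varepsilon}(b)\le p_{1-\varepsilon}(z)$, $=p_{1-\varepsilon}(b)+1$ if $p_{1-\varepsilon}(z)<p_{1-\varepsilon}(b)<n$, $=p_{1-\varepsilon}(z)+1$ if $p_{1-\varepsilon}(b)=n$. Left Rauzy move of type $\varepsilon$: $\tilde\varepsilon\mathbf{p}=(p'_0,p'_1)$, $p'_\varepsilon=p_\varepsilon$, and for $a=p_\varepsilon^{-1}(1)$, $p'_{1-\varepsilon}(b)=p_{1-\varepsilon}(a)-1$ if $p_{1-\varepsilon}(b)=1$, $=p_{1-\varepsilon}(b)-1$ if $1<p_{1-\varepsilon}(b)<p_{1-\varepsilon}(a)$, unchanged otherwise. The labeled extended Rauzy class of $\mathbf{p}$ is the set of pairs reachable from $\mathbf{p}$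 by Rauzy and left Rauzy moves of both types. $\mathcal{S}(\mathbf{p}):\mathcal{A}\to\mathcal{A}$: $\mathcal{S}(\mathbf{p})(\alpha)=p_0^{-1}(1)$ if $p_1(\alpha)=1$; $=p_0^{-1}(p_0(p_1^{-1}(n))+1)$ if $p_1(\alpha)=p_1(p_0^{-1}(n))+1$; $=p_0^{-1}(p_0(p_1^{-1}(p_1(\alpha)-1))+1)$ otherwise. $\mathcal{Y}(\mathbf{p})$ is the first return map of $\mathcal{S}(\mathbf{p})$ to $\mathcal{A}\setminus\{p_0^{-1}(1)\}$ (i.e. $\mathcal{Y}(\mathbf{p})(b)=\mathcal{S}(\mathbf{p})^2(b)$ if $p_1(b)=1$ and $\mathcal{S}(\mathbf{p})(b)$ otherwise), and $\mathcal{P}(\mathbf{p})$ is the unordered list, with multiplicity, of the cycle lengths of $\mathcal{Y}(\mathbf{p})$. *)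

theory Defs
  imports Main "HOL-Library.Multiset" "HOL-Library.Cardinality"
begin

text \<open>The alphabet is a finite type 'a; n = CARD('a). A pair is a pair of maps
  'a => nat; component 0 is fst, component 1 is snd.\<close>

type_synonym 'a rpair = "('a \<Rightarrow> nat) \<times> ('a \<Rightarrow> nat)"

definition is_pair :: "('a::finite) rpair \<Rightarrow> bool" where
  "is_pair p \<longleftrightarrow> bij_betw (fst p) UNIV {1 .. CARD('a)} \<and> bij_betw (snd p) UNIV {1 .. CARD('a)}"

definition irreducible :: "('a::finite) rpair \<Rightarrow> bool" where
  "irreducible p \<longleftrightarrow>
     (\<forall>k. 1 \<le> k \<and> k < CARD('a) \<longrightarrow> fst p -` {1..k} \<noteq> snd p -` {1..k})"

definition comp :: "'a rpair \<Rightarrow> nat \<Rightarrow> ('a \<Rightarrow> nat)" where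
  "comp p e = (if e = 0 then fst p else snd p)"

definition mk_pair :: "nat \<Rightarrow> ('a \<Rightarrow> nat) \<Rightarrow> ('a \<Rightarrow> nat) \<Rightarrow> 'a rpair" where
  "mk_pair e pe po = (if e = 0 then (pe, po) else (po, pe))"

definition rauzy_move :: "nat \<Rightarrow> ('a::finite) rpair \<Rightarrow> 'a rpair" where
  "rauzy_move e p =
    (let n = CARD('a); pe = comp p e; po = comp p (1 - e); z = inv pe n;
         po' = (\<lambda>b. if po b \<le> po z then po b
                    else if po b < n then po b + 1
                    else po z + 1)
     in mk_pair e pe po')"

definition left_rauzy_move :: "nat \<Rightarrow> ('a::finite) rpair \<Rightarrow> 'a rpair" where
  "left_rauzy_move e p =
    (let pe = comp p e; po = comp p (1 - e); a = inv pe 1;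
         po' = (\<lambda>b. if po b = 1 then po a - 1
                    else if 1 < po b \<and> po b < po a then po b - 1
                    else po b)
     in mk_pair e pe po')"

definition rauzy_step :: "('a::finite) rpair \<Rightarrow> 'a rpair \<Rightarrow> bool" where
  "rauzy_step p q \<longleftrightarrow> (\<exists>e\<in>{0,1}. q = rauzy_move e p \<or> q = left_rauzy_move e p)"

definition labeled_extended_rauzy_class :: "('a::finite) rpair \<Rightarrow> 'a rpair set" where
  "labeled_extended_rauzy_class p = {q. rauzy_step\<^sup>*\<^sup>* p q}"

definition S_map :: "('a::finite) rpair \<Rightarrow> 'a \<Rightarrow> 'a" where
  "S_map p \<alpha> =
    (let n = CARD('a); p0 = fst p; p1 = snd p in
     if p1 \<alpha> = 1 then inv p0 1
     else if p1 \<alpha> = p1 (inv p0 n) + 1 then inv p0 (p0 (inv p1 n) + 1)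
     else inv p0 (p0 (inv p1 (p1 \<alpha> - 1)) + 1))"

definition Y_map :: "('a::finite) rpair \<Rightarrow> 'a \<Rightarrow> 'a" where
  "Y_map p b = (if snd p b = 1 then S_map p (S_map p b) else S_map p b)"

definition orbit_of :: "('a \<Rightarrow> 'a) \<Rightarrow> 'a \<Rightarrow> 'a set" where
  "orbit_of f x = range (\<lambda>k. (f ^^ k) x)"

definition P_inv :: "('a::finite) rpair \<Rightarrow> nat multiset" where
  "P_inv p = image_mset card
     (mset_set (orbit_of (Y_map p) ` (UNIV - {inv (fst p) 1})))"

end

theory Submission
  imports Defs
begin

definition sw :: "'a rpair \<Rightarrow> 'a rpair" where "sw p = (snd p, fst p)"

definition W :: "('a::finite) rpair \<Rightarrow> bool" where
  "W p \<longleftrightarrow> is_pair p \<and> inv (fst p) 1 \<noteq> inv (snd p) 1 \<and> inv (fst p) CARD('a) \<noteq> inv (snd p) CARD('a)"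

lemma bijF:
  fixes f :: "'a::finite \<Rightarrow> nat"
  assumes "bij_betw f UNIV {1..CARD('a)}"
  shows "inj f" "\<And>x. 1 \<le> f x" "\<And>x. f x \<le> CARD('a)"
    "\<And>i. 1 \<le> i \<Longrightarrow> i \<le> CARD('a) \<Longrightarrow> f (inv f i) = i"
    "\<And>x. inv f (f x) = x"
proof -
  show i: "inj f" using assms unfolding bij_betw_def by (rule conjunct1)
  have "f x \<in> {1..CARD('a)}" for x using bij_betw_apply[OF assms UNIV_I] .
  then show "\<And>x. 1 \<le> f x" "\<And>x. f x \<le> CARD('a)" by auto
  show "\<And>i. 1 \<le> i \<Longrightarrow> i \<le> CARD('a) \<Longrightarrow> f (inv f i) = i"
    using assms by (metis atLeastAtMost_iff bij_betw_imp_surj_on f_inv_into_f)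
  show "\<And>x. inv f (f x) = x" using i by simp
qed

lemma S_unf: "S_map p a = (if snd p a = 1 then inv (fst p) 1
     else if snd p a = snd p (inv (fst p) CARD('a)) + 1 then inv (fst p) (fst p (inv (snd p) CARD('a)) + 1)
     else inv (fst p) (fst p (inv (snd p) (snd p a - 1)) + 1))"
  for p :: "('a::finite) rpair"
  by (simp add: S_map_def Let_def)

lemma S_inv:
  fixes p :: "('a::finite) rpair"
  assumes "W p"
  shows "S_map (sw p) (S_map p a) = a"
proof -
  obtain p0 p1 where p: "p = (p0, p1)" by fastforce
  define n where "n = CARD('a)"
  have b0: "bij_betw p0 UNIV {1..n}" and b1: "bij_betw p1 UNIV {1..n}"
    using assms by (auto simp: W_def is_pair_def p n_def)
  note f0 = bijF[OF b0[unfolded n_def]] and f1 = bijF[OF b1[unfolded n_def]]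
  have ne1: "inv p0 1 \<noteq> inv p1 1" and nen: "inv p0 n \<noteq> inv p1 n"
    using assms by (auto simp: W_def p n_def)
  have n1: "1 \<le> n" using f0(2)[of a] f0(3)[of a] n_def by linarith
  have A: "p0 (inv p1 n) \<noteq> n" using nen f0(5) by metis
  have B: "p0 (inv p1 n) < n" using A f0(3)[of "inv p1 n"] n_def by linarith
  show ?thesis
  proof (cases "p1 a = 1")
    case True
    then show ?thesis using f0(4)[of 1] n1 f1(5)[of a] unfolding n_def
      by (simp add: S_unf sw_def p)
  next
    case F1: False
    show ?thesis
    proof (cases "p1 a = p1 (inv p0 n) + 1")
      case True
      have c: "p0 (inv p0 (p0 (inv p1 n) + 1)) = p0 (inv p1 n) + 1"
        using f0(4)[of "p0 (inv p1 n) + 1"] B n_def by simp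
      then show ?thesis using True F1 f1(5)[of a] f0(2)[of "inv p1 n"] unfolding n_def[symmetric]
        by (simp add: S_unf sw_def p n_def[symmetric])
    next
      case F2: False
      define d where "d = inv p1 (p1 a - 1)"
      have pd: "p1 d = p1 a - 1" unfolding d_def using f1(2)[of a] f1(3)[of a] F1 f1(4) n_def by simp
      have dn: "d \<noteq> inv p0 n"
      proof
        assume "d = inv p0 n"
        then show False using pd F1 F2 f1(2)[of a] by simp
      qed
      have "p0 d \<noteq> n" using dn f0(5) by metis
      hence pdn: "p0 d < n" using f0(3)[of d] n_def by linarith
      have c: "p0 (inv p0 (p0 d + 1)) = p0 d + 1"
        using f0(4)[of "p0 d + 1"] pdn n_def by simp
      have dnn: "d \<noteq> inv p1 n"
      proof
        assume "d = inv p1 n"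
        hence "p1 d = n" using f1(4)[of n] n1 n_def by simp
        thus False using pd f1(3)[of a] f1(2)[of a] n_def by linarith
      qed
      have e: "p0 d \<noteq> p0 (inv p1 n)" using dnn f0(1) by (meson injD)
      have "S_map p a = inv p0 (p0 d + 1)"
        using F1 F2 by (simp add: S_unf p d_def n_def)
      moreover have "S_map (sw p) (inv p0 (p0 d + 1)) = inv p1 (p1 d + 1)"
        using c e f0(2)[of d] by (simp add: S_unf sw_def p f0(5) n_def[symmetric])
      moreover have "p1 d + 1 = p1 a" using pd f1(2)[of a] F1 by linarith
      ultimately show ?thesis using f1(5) by metis
    qed
  qed
qed

lemma reindex:
  fixes p1 :: "'a::finite \<Rightarrow> nat" and f g :: "nat \<Rightarrow> nat"
  assumes b: "bij_betw p1 UNIV {1..CARD('a)}"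
    and fg: "\<And>j. 1 \<le> j \<Longrightarrow> j \<le> CARD('a) \<Longrightarrow> 1 \<le> f j \<and> f j \<le> CARD('a) \<and> g (f j) = j"
    and gf: "\<And>i. 1 \<le> i \<Longrightarrow> i \<le> CARD('a) \<Longrightarrow> 1 \<le> g i \<and> g i \<le> CARD('a) \<and> f (g i) = i"
  shows "bij_betw (\<lambda>b. f (p1 b)) UNIV {1..CARD('a)}"
    "\<And>i. 1 \<le> i \<Longrightarrow> i \<le> CARD('a) \<Longrightarrow> inv (\<lambda>b. f (p1 b)) i = inv p1 (g i)"
proof -
  have bf: "bij_betw f {1..CARD('a)} {1..CARD('a)}"
    by (rule bij_betw_byWitness[where f'=g]) (use fg gf in auto)
  show bb: "bij_betw (\<lambda>b. f (p1 b)) UNIV {1..CARD('a)}"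
    using bij_betw_trans[OF b bf] by (simp add: o_def)
  have i: "inj (\<lambda>b. f (p1 b))" using bb unfolding bij_betw_def by (rule conjunct1)
  note f1 = bijF[OF b]
  fix i assume h: "1 \<le> i" "i \<le> CARD('a)"
  have "f (p1 (inv p1 (g i))) = i" using f1(4)[of "g i"] gf[OF h] by simp
  then show "inv (\<lambda>b. f (p1 b)) i = inv p1 (g i)"
    using i by (metis inv_f_f)
qed

lemma rm0_eq:
  fixes p :: "('a::finite) rpair"
  shows "rauzy_move 0 p = (fst p, \<lambda>b. (\<lambda>j. if j \<le> snd p (inv (fst p) CARD('a)) then j
      else if j < CARD('a) then j + 1 else snd p (inv (fst p) CARD('a)) + 1) (snd p b))"
  by (simp add: rauzy_move_def Let_def comp_def mk_pair_def)

lemma rm0: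
  fixes p :: "('a::finite) rpair"
  assumes "W p"
  shows "fst (rauzy_move 0 p) = fst p" "W (rauzy_move 0 p)" "S_map (rauzy_move 0 p) = S_map p"
    "Y_map (rauzy_move 0 p) = Y_map p"
proof -
  obtain p0 p1 where p: "p = (p0, p1)" by fastforce
  define n where "n = CARD('a)"
  have b0: "bij_betw p0 UNIV {1..n}" and b1: "bij_betw p1 UNIV {1..n}"
    using assms by (auto simp: W_def is_pair_def p n_def)
  note f0 = bijF[OF b0[unfolded n_def]] and f1 = bijF[OF b1[unfolded n_def]]
  have ne1: "inv p0 1 \<noteq> inv p1 1" and nen: "inv p0 n \<noteq> inv p1 n"
    using assms by (auto simp: W_def p n_def)
  have n1: "1 \<le> n" using f0(2)[of undefined] f0(3)[of undefined] n_def by linarith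
  define m where "m = p1 (inv p0 n)"
  have m1: "1 \<le> m" using f1(2) m_def by simp
  have mn: "m < n"
  proof -
    have "m \<noteq> n" using nen f1(5)[of "inv p0 n"] m_def by metis
    thus ?thesis using f1(3)[of "inv p0 n"] m_def n_def by simp
  qed
  define f where "f = (\<lambda>j::nat. if j \<le> m then j else if j < n then j + 1 else m + 1)"
  define g where "g = (\<lambda>i::nat. if i \<le> m then i else if i = m + 1 then n else i - 1)"
  have q: "rauzy_move 0 p = (p0, \<lambda>b. f (p1 b))"
    unfolding rm0_eq p f_def m_def n_def prod.sel by simp
  have fgc: "\<And>j. 1 \<le> j \<Longrightarrow> j \<le> CARD('a) \<Longrightarrow> 1 \<le> f j \<and> f j \<le> CARD('a) \<and> g (f j) = j"
    using m1 mn unfolding f_def g_def n_def by auto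
  have gfc: "\<And>i. 1 \<le> i \<Longrightarrow> i \<le> CARD('a) \<Longrightarrow> 1 \<le> g i \<and> g i \<le> CARD('a) \<and> f (g i) = i"
    using m1 mn unfolding f_def g_def n_def by auto
  note R = reindex[OF b1[unfolded n_def] fgc gfc]
  show "fst (rauzy_move 0 p) = fst p" unfolding q by (simp add: p)
  have invm: "inv p1 m = inv p0 n" using f1(5) m_def by simp
  have W2: "inv p1 (g n) \<noteq> inv p0 n"
  proof (cases "n = m + 1")
    case True then show ?thesis using nen by (simp add: g_def)
  next
    case False
    then have gn: "g n = n - 1" using mn by (simp add: g_def)
    show ?thesis
    proof
      assume "inv p1 (g n) = inv p0 n"
      hence "p1 (inv p1 (n - 1)) = p1 (inv p1 m)" using gn invm by simp
      hence "n - 1 = m" using f1(4)[of "n-1"] f1(4)[of m] m1 mn n_def by simp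
      thus False using False mn by simp
    qed
  qed
  show "W (rauzy_move 0 p)"
    using R(1) R(2)[of 1] R(2)[of n] b0 n1 m1 ne1 W2
    unfolding W_def is_pair_def q n_def[symmetric] by (simp add: g_def)
  have fm: "f m = m" by (simp add: f_def)
  have Seq: "S_map (p0, \<lambda>b. f (p1 b)) a = S_map (p0, p1) a" for a
  proof -
    define j where "j = p1 a"
    have j1: "1 \<le> j" "j \<le> n" using f1(2)[of a] f1(3)[of a] j_def n_def by auto
    have A: "S_map (p0, \<lambda>b. f (p1 b)) a = (if f j = 1 then inv p0 1
       else if f j = m + 1 then inv p0 (p0 (inv p1 (g n)) + 1)
       else inv p0 (p0 (inv p1 (g (f j - 1))) + 1))"
    proof -
      have "f j \<noteq> 1 \<Longrightarrow> 1 \<le> f j - 1 \<and> f j - 1 \<le> n" using j1 mn m1 by (auto simp: f_def)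
      then show ?thesis
        using R(2)[of n] R(2)[of "f j - 1"] n1 fm
        by (auto simp: S_unf j_def m_def n_def)
    qed
    have B: "S_map (p0, p1) a = (if j = 1 then inv p0 1
       else if j = m + 1 then inv p0 (p0 (inv p1 n) + 1)
       else inv p0 (p0 (inv p1 (j - 1)) + 1))"
      by (simp add: S_unf j_def m_def n_def)
    show ?thesis unfolding A B using j1 m1 mn
      by (auto simp: f_def g_def)
  qed
  show S: "S_map (rauzy_move 0 p) = S_map p" unfolding q using Seq by (auto simp: p)
  have "snd (rauzy_move 0 p) b = 1 \<longleftrightarrow> snd p b = 1" for b
    using f1(2)[of b] m1 unfolding q by (auto simp: f_def p)
  then show "Y_map (rauzy_move 0 p) = Y_map p"
    by (auto simp: Y_map_def S)
qed

definition TS :: "('a::finite) rpair \<Rightarrow> 'a \<Rightarrow> 'a" where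
  "TS p x = (if x = inv (fst p) CARD('a) then inv (fst p) (fst p (inv (snd p) CARD('a)) + 1)
             else inv (fst p) (fst p x + 1))"

lemma S_TS:
  fixes p :: "('a::finite) rpair"
  assumes "W p"
  shows "S_map p a = (if snd p a = 1 then inv (fst p) 1 else TS p (inv (snd p) (snd p a - 1)))"
proof -
  obtain p0 p1 where p: "p = (p0, p1)" by fastforce
  define n where "n = CARD('a)"
  have b1: "bij_betw p1 UNIV {1..n}"
    using assms by (auto simp: W_def is_pair_def p n_def)
  note f1 = bijF[OF b1[unfolded n_def]]
  show ?thesis
  proof (cases "p1 a = 1")
    case True then show ?thesis by (simp add: S_unf p)
  next
    case False
    have pd: "p1 (inv p1 (p1 a - 1)) = p1 a - 1" using f1(2)[of a] f1(3)[of a] False f1(4) by simp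
    have "inv p1 (p1 a - 1) = inv p0 n \<longleftrightarrow> p1 a = p1 (inv p0 n) + 1"
    proof
      assume "inv p1 (p1 a - 1) = inv p0 n"
      then show "p1 a = p1 (inv p0 n) + 1" using pd False f1(2)[of a] by (metis le_add_diff_inverse2)
    next
      assume "p1 a = p1 (inv p0 n) + 1"
      then show "inv p1 (p1 a - 1) = inv p0 n" using f1(5) by simp
    qed
    then show ?thesis using False by (simp add: S_unf p TS_def n_def)
  qed
qed

lemma lm0_eq:
  fixes p :: "('a::finite) rpair"
  shows "left_rauzy_move 0 p = (fst p, \<lambda>b. (\<lambda>j. if j = 1 then snd p (inv (fst p) 1) - 1
      else if 1 < j \<and> j < snd p (inv (fst p) 1) then j - 1 else j) (snd p b))"
  unfolding left_rauzy_move_def Let_def comp_def mk_pair_def by simp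

lemma lm0:
  fixes p :: "('a::finite) rpair"
  assumes "W p"
  shows "fst (left_rauzy_move 0 p) = fst p" "W (left_rauzy_move 0 p)"
    "\<And>b. b \<noteq> inv (fst p) 1 \<Longrightarrow> Y_map (left_rauzy_move 0 p) b = Y_map p b"
proof -
  obtain p0 p1 where p: "p = (p0, p1)" by fastforce
  define n where "n = CARD('a)"
  have b0: "bij_betw p0 UNIV {1..n}" and b1: "bij_betw p1 UNIV {1..n}"
    using assms by (auto simp: W_def is_pair_def p n_def)
  note f0 = bijF[OF b0[unfolded n_def]] and f1 = bijF[OF b1[unfolded n_def]]
  have ne1: "inv p0 1 \<noteq> inv p1 1" and nen: "inv p0 n \<noteq> inv p1 n"
    using assms by (auto simp: W_def p n_def)
  have n1: "1 \<le> n" using f0(2)[of undefined] f0(3)[of undefined] n_def by linarith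
  define k where "k = p1 (inv p0 1)"
  have k2: "2 \<le> k"
  proof -
    have "k \<noteq> 1" using ne1 f1(5)[of "inv p0 1"] k_def by metis
    thus ?thesis using f1(2)[of "inv p0 1"] k_def by simp
  qed
  have kn: "k \<le> n" using f1(3) k_def n_def by simp
  define f where "f = (\<lambda>j::nat. if j = 1 then k - 1 else if 1 < j \<and> j < k then j - 1 else j)"
  define g where "g = (\<lambda>i::nat. if i \<le> k - 2 then i + 1 else if i = k - 1 then 1 else i)"
  have q: "left_rauzy_move 0 p = (p0, \<lambda>b. f (p1 b))"
    unfolding lm0_eq p f_def k_def prod.sel by simp
  have fgc: "\<And>j. 1 \<le> j \<Longrightarrow> j \<le> CARD('a) \<Longrightarrow> 1 \<le> f j \<and> f j \<le> CARD('a) \<and> g (f j) = j"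
    using k2 kn unfolding f_def g_def n_def by auto
  have gfc: "\<And>i. 1 \<le> i \<Longrightarrow> i \<le> CARD('a) \<Longrightarrow> 1 \<le> g i \<and> g i \<le> CARD('a) \<and> f (g i) = i"
    using k2 kn unfolding f_def g_def n_def by auto
  note R = reindex[OF b1[unfolded n_def] fgc gfc]
  show "fst (left_rauzy_move 0 p) = fst p" unfolding q by (simp add: p)
  have invk: "inv p1 k = inv p0 1" using f1(5) k_def by simp
  have gn: "g n = n" using k2 kn unfolding g_def by arith
  have W1: "inv p1 (g 1) \<noteq> inv p0 1"
  proof (cases "k = 2")
    case True then show ?thesis using ne1 by (simp add: g_def)
  next
    case False
    then have g1: "g 1 = 2" using k2 by (simp add: g_def)
    show ?thesis
    proof
      assume "inv p1 (g 1) = inv p0 1"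
      hence "p1 (inv p1 2) = p1 (inv p1 k)" using g1 invk by simp
      hence "2 = k" using f1(4)[of 2] f1(4)[of k] k2 kn n_def by simp
      thus False using False by simp
    qed
  qed
  show Wq: "W (left_rauzy_move 0 p)"
    using R(1) R(2)[of 1] R(2)[of n] b0 n1 ne1 nen W1 gn
    unfolding W_def is_pair_def q n_def[symmetric] by simp
  have TSq: "TS (p0, \<lambda>b. f (p1 b)) = TS (p0, p1)"
    using R(2)[of n] gn n1 by (auto simp: TS_def n_def intro!: ext)
  have Sq: "S_map (p0, \<lambda>b. f (p1 b)) a = (if f (p1 a) = 1 then inv p0 1
         else TS (p0, p1) (inv p1 (g (f (p1 a) - 1))))" for a
  proof -
    have "f (p1 a) \<noteq> 1 \<Longrightarrow> 1 \<le> f (p1 a) - 1 \<and> f (p1 a) - 1 \<le> n"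
      using fgc[of "p1 a"] f1(2)[of a] f1(3)[of a] n_def by auto
    then show ?thesis using S_TS[OF Wq, of a] R(2)[of "f (p1 a) - 1"] TSq unfolding q
      by (auto simp: n_def)
  qed
  have Sp: "S_map (p0, p1) a = (if p1 a = 1 then inv p0 1
         else TS (p0, p1) (inv p1 (p1 a - 1)))" for a
    using S_TS[OF assms, of a] by (simp add: p)
  fix b assume bt: "b \<noteq> inv (fst p) 1"
  define j where "j = p1 b"
  have j1: "1 \<le> j" "j \<le> n" using f1(2)[of b] f1(3)[of b] j_def n_def by auto
  have jk: "j \<noteq> k" using bt f1(5)[of b] invk j_def p by auto
  have pt1: "p1 (inv p0 1) = k" using k_def by simp
  show "Y_map (left_rauzy_move 0 p) b = Y_map p b"
  proof (cases "k = 2")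
    case True
    have "f = (\<lambda>j. j)" using True by (auto simp: f_def intro!: ext)
    then have "left_rauzy_move 0 p = p" using q p by simp
    then show ?thesis by simp
  next
    case k3: False
    have fk: "f k = k" using k2 by (simp add: f_def)
    show ?thesis
    proof -
      consider "j = 1" | "j = 2" | "3 \<le> j \<and> j < k" | "k < j" using j1 jk k3 k2 by linarith
      then show ?thesis
      proof cases
        case 1
        have "f j = k - 1" "k - 1 \<noteq> 1" "k - 1 - 1 = k - 2" "g (k - 2) = k - 1" "k \<noteq> 1"
          using 1 k3 k2 by (auto simp: f_def g_def)
        then show ?thesis using 1 pt1 unfolding q Y_map_def
          by (simp add: Sq Sp p j_def[symmetric])
      next
        case 2
        have "g (k - 1) = 1" "f j = 1" "f k = k" "k \<noteq> 1" using 2 k2 k3 by (auto simp: f_def g_def)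
        then show ?thesis using 2 pt1 unfolding q Y_map_def
          by (simp add: Sq Sp p j_def[symmetric])
      next
        case 3
        have "f j = j - 1" "j - 1 \<noteq> 1" "j - 1 - 1 = j - 2" "g (j - 2) = j - 1" "j \<noteq> 1"
          using 3 by (auto simp: f_def g_def)
        then show ?thesis unfolding q Y_map_def
          by (simp add: Sq Sp p j_def[symmetric])
      next
        case 4
        have "f j = j" "j \<noteq> 1" "g (j - 1) = j - 1" using 4 k2 by (auto simp: f_def g_def)
        then show ?thesis unfolding q Y_map_def
          by (simp add: Sq Sp p j_def[symmetric])
      qed
    qed
  qed
qed

lemma W_sw: "W p \<Longrightarrow> W (sw p)"
  by (auto simp: W_def is_pair_def sw_def)

lemma sw_sw[simp]: "sw (sw p) = p" by (simp add: sw_def)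

lemma rm1_sw: "rauzy_move 1 p = sw (rauzy_move 0 (sw p))"
  by (simp add: rauzy_move_def Let_def comp_def mk_pair_def sw_def)

lemma lm1_sw: "left_rauzy_move 1 p = sw (left_rauzy_move 0 (sw p))"
  by (simp add: left_rauzy_move_def Let_def comp_def mk_pair_def sw_def)

lemma Y_facts:
  fixes p :: "('a::finite) rpair"
  assumes "W p"
  shows "\<And>b. b \<noteq> inv (fst p) 1 \<Longrightarrow> Y_map p b \<noteq> inv (fst p) 1"
    "inj_on (Y_map p) (UNIV - {inv (fst p) 1})"
proof -
  obtain p0 p1 where p: "p = (p0, p1)" by fastforce
  have b1: "bij_betw p1 UNIV {1..CARD('a)}"
    using assms by (auto simp: W_def is_pair_def p)
  note f1 = bijF[OF b1]
  have ne1: "inv p0 1 \<noteq> inv p1 1" using assms by (auto simp: W_def p)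
  have n1: "1 \<le> CARD('a)" using f1(2)[of undefined] f1(3)[of undefined] by linarith
  have iS: "inj (S_map p)" using S_inv[OF assms] by (metis injI)
  have Sb: "S_map p (inv p1 1) = inv p0 1" using f1(4)[of 1] n1 by (simp add: S_unf p)
  have s1: "p1 b = 1 \<longleftrightarrow> b = inv p1 1" for b using f1(4)[of 1] f1(5)[of b] n1 by auto
  define \<phi> where "\<phi> b = (if b = inv p1 1 then inv p0 1 else b)" for b
  have Y\<phi>: "Y_map p b = S_map p (\<phi> b)" for b
  proof (cases "b = inv p1 1")
    case True
    then have "p1 b = 1" using f1(4)[of 1] n1 by simp
    then show ?thesis using True Sb by (simp add: Y_map_def \<phi>_def p)
  next
    case False
    then have "p1 b \<noteq> 1" using f1(5)[of b] by auto
    then show ?thesis using False by (simp add: Y_map_def \<phi>_def p)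
  qed
  show "Y_map p b \<noteq> inv (fst p) 1" if "b \<noteq> inv (fst p) 1" for b
  proof
    assume "Y_map p b = inv (fst p) 1"
    hence "S_map p (\<phi> b) = S_map p (inv p1 1)" using Y\<phi> Sb p by simp
    hence "\<phi> b = inv p1 1" using iS by (meson injD)
    thus False using that ne1 by (auto simp: \<phi>_def p split: if_splits)
  qed
  have \<phi>i: "inj_on \<phi> (UNIV - {inv p0 1})" by (auto simp: \<phi>_def inj_on_def)
  show "inj_on (Y_map p) (UNIV - {inv (fst p) 1})"
  proof (rule inj_onI)
    fix x y assume x: "x \<in> UNIV - {inv (fst p) 1}" and y: "y \<in> UNIV - {inv (fst p) 1}"
      and e: "Y_map p x = Y_map p y"
    have "\<phi> x = \<phi> y" using e iS unfolding Y\<phi> by (meson injD)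
    then show "x = y" using \<phi>i x y by (simp add: p inj_on_def)
  qed
qed

lemma funpow_mult_period:
  assumes "(f ^^ m) x = x" shows "(f ^^ (c * m)) x = x"
proof (induction c)
  case 0 then show ?case by simp
next
  case (Suc c)
  have "(f ^^ (Suc c * m)) x = (f ^^ m) ((f ^^ (c * m)) x)"
    by (simp add: funpow_add add.commute)
  then show ?case using Suc assms by simp
qed

lemma orbit_conj:
  fixes f g h :: "'a::finite \<Rightarrow> 'a"
  assumes fX: "\<And>x. x \<in> X \<Longrightarrow> f x \<in> X" and fi: "inj_on f X" and hi: "inj h"
    and rel: "\<And>x. x \<in> X \<Longrightarrow> g (h (f x)) = h x" and x: "x \<in> X"
  shows "orbit_of g (h x) = h ` orbit_of f x"
proof -
  have itX: "(f ^^ k) z \<in> X" if "z \<in> X" for k z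
    using that by (induction k) (auto intro: fX)
  define f' where "f' y = (if y \<in> X then f y else y)" for y
  have f'i: "inj f'"
  proof (rule injI)
    fix a b assume e: "f' a = f' b"
    show "a = b"
      using e fi fX by (auto simp: f'_def inj_on_def split: if_splits)
  qed
  have f'it: "(f' ^^ k) x = (f ^^ k) x" for k
  proof (induction k)
    case 0 then show ?case by simp
  next
    case (Suc k) then show ?case using itX[OF x, of k] by (simp add: f'_def)
  qed
  obtain m where m: "m > 0" "(f' ^^ m) x = x"
    using funpow_inj_finite[OF f'i, of x] by auto
  have per: "(f ^^ (c * m)) x = x" for c
    using funpow_mult_period[where f=f' and m=m and x=x and c=c] m(2) f'it by simp
  have itrel: "(g ^^ k) (h ((f ^^ k) z)) = h z" if "z \<in> X" for k z
    using that
  proof (induction k arbitrary: z)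
    case 0 then show ?case by simp
  next
    case (Suc k)
    have "(g ^^ Suc k) (h ((f ^^ Suc k) z)) = (g ^^ k) (g (h (f ((f ^^ k) z))))"
      by (simp add: funpow_swap1)
    also have "\<dots> = (g ^^ k) (h ((f ^^ k) z))" using rel[OF itX[OF Suc.prems]] by simp
    also have "\<dots> = h z" using Suc by simp
    finally show ?case .
  qed
  have km: "k \<le> k * m" for k using m(1) by simp
  show ?thesis
  proof
    show "orbit_of g (h x) \<subseteq> h ` orbit_of f x"
    proof
      fix y assume "y \<in> orbit_of g (h x)"
      then obtain k where y: "y = (g ^^ k) (h x)" by (auto simp: orbit_of_def)
      define z where "z = (f ^^ (k * m - k)) x"
      have "(f ^^ k) z = (f ^^ (k + (k * m - k))) x" by (simp add: z_def funpow_add)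
      also have "\<dots> = x" using km[of k] per[of k] by simp
      finally have "y = h z" using y itrel[OF itX[OF x], of k "k * m - k"] z_def by simp
      then show "y \<in> h ` orbit_of f x" by (auto simp: orbit_of_def z_def)
    qed
  next
    show "h ` orbit_of f x \<subseteq> orbit_of g (h x)"
    proof
      fix y assume "y \<in> h ` orbit_of f x"
      then obtain j where y: "y = h ((f ^^ j) x)" by (auto simp: orbit_of_def)
      define k where "k = j * m - j"
      have "(f ^^ k) ((f ^^ j) x) = (f ^^ (k + j)) x" by (simp add: funpow_add)
      also have "\<dots> = x" using km[of j] per[of j] by (simp add: k_def)
      finally have "(g ^^ k) (h x) = y" using itrel[OF itX[OF x, of j], of k] y by simp
      then show "y \<in> orbit_of g (h x)" by (auto simp: orbit_of_def)
    qed
  qed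
qed

lemma P_sw:
  fixes p :: "('a::finite) rpair"
  assumes W: "W p"
  shows "P_inv (sw p) = P_inv p"
proof -
  define S where "S = S_map p"
  define h where "h = S_map (sw p)"
  define X where "X = UNIV - {inv (fst p) 1}"
  define Z where "Z = UNIV - {inv (snd p) 1}"
  have hS: "h (S a) = a" for a using S_inv[OF W] by (simp add: h_def S_def)
  have Sh: "S (h a) = a" for a using S_inv[OF W_sw[OF W]] by (simp add: h_def S_def)
  have hi: "inj h" using hS by (metis injI Sh)
  obtain p0 p1 where p: "p = (p0, p1)" by fastforce
  have b0: "bij_betw p0 UNIV {1..CARD('a)}" and b1: "bij_betw p1 UNIV {1..CARD('a)}"
    using W by (auto simp: W_def is_pair_def p)
  note f0 = bijF[OF b0] and f1 = bijF[OF b1]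
  have n1: "1 \<le> CARD('a)" using f1(2)[of undefined] f1(3)[of undefined] by linarith
  have Sb: "S (inv p1 1) = inv p0 1" using f0(4)[of 1] f1(4)[of 1] n1 by (simp add: S_unf p S_def)
  have ht: "h (inv p0 1) = inv p1 1" using hS[of "inv p1 1"] Sb by simp
  have s1: "p1 b = 1 \<longleftrightarrow> b = inv p1 1" for b using f1(4)[of 1] f1(5)[of b] n1 by auto
  have s0: "p0 b = 1 \<longleftrightarrow> b = inv p0 1" for b using f0(4)[of 1] f0(5)[of b] n1 by auto
  have hX: "h ` X = Z"
  proof -
    have "h ` X = h ` UNIV - h ` {inv p0 1}" unfolding X_def p fst_conv
      using hi by (simp add: image_set_diff)
    also have "h ` UNIV = UNIV" using surjI[of h S] hS by blast
    finally show ?thesis using ht by (simp add: Z_def p)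
  qed
  note YF = Y_facts[OF W]
  have Ysw: "Y_map (sw p) y = (if y = inv p0 1 then h (h y) else h y)" for y
    using s0[of y] by (simp add: Y_map_def sw_def h_def p)
  have rel: "Y_map (sw p) (h (Y_map p x)) = h x" if "x \<in> X" for x
  proof (cases "x = inv p1 1")
    case True
    have "Y_map p x = S (S x)" using True s1 by (simp add: Y_map_def S_def p)
    then have "h (Y_map p x) = S x" using hS by simp
    also have "S x = inv p0 1" using True Sb by simp
    finally show ?thesis using True ht by (simp add: Ysw)
  next
    case False
    have "Y_map p x = S x" using False s1 by (simp add: Y_map_def S_def p)
    then have "h (Y_map p x) = x" using hS by simp
    moreover have "x \<noteq> inv p0 1" using that by (simp add: X_def p)
    ultimately show ?thesis by (simp add: Ysw)
  qed
  have oc: "orbit_of (Y_map (sw p)) (h x) = h ` orbit_of (Y_map p) x" if "x \<in> X" for x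
    by (rule orbit_conj[OF _ YF(2)[folded X_def] hi rel that]) (use YF(1) in \<open>auto simp: X_def\<close>)
  have "orbit_of (Y_map (sw p)) ` Z = (image h) ` (orbit_of (Y_map p) ` X)"
    unfolding hX[symmetric] image_image using oc by (auto intro: image_cong)
  moreover have "inj_on (image h) A" for A :: "'a set set"
    using hi by (simp add: inj_on_def inj_image_eq_iff)
  ultimately have "mset_set (orbit_of (Y_map (sw p)) ` Z) = image_mset (image h) (mset_set (orbit_of (Y_map p) ` X))"
    by (simp add: image_mset_mset_set)
  then have "image_mset card (mset_set (orbit_of (Y_map (sw p)) ` Z)) = image_mset card (mset_set (orbit_of (Y_map p) ` X))"
    using hi by (simp add: multiset.map_comp o_def card_image inj_on_subset[OF hi])
  moreover have "fst (sw p) = snd p" by (simp add: sw_def)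
  ultimately show ?thesis unfolding P_inv_def X_def Z_def by simp
qed

lemma P_congr:
  fixes p q :: "('a::finite) rpair"
  assumes "fst q = fst p" and "\<And>b. b \<noteq> inv (fst p) 1 \<Longrightarrow> Y_map q b = Y_map p b"
    and "\<And>b. b \<noteq> inv (fst p) 1 \<Longrightarrow> Y_map p b \<noteq> inv (fst p) 1"
  shows "P_inv q = P_inv p"
proof -
  have it: "(Y_map q ^^ k) x = (Y_map p ^^ k) x \<and> (Y_map p ^^ k) x \<noteq> inv (fst p) 1"
    if "x \<noteq> inv (fst p) 1" for x k
    using that
  proof (induction k)
    case 0 then show ?case by simp
  next
    case (Suc k)
    then show ?case using assms(2)[of "(Y_map p ^^ k) x"] assms(3)[of "(Y_map p ^^ k) x"] by simp
  qed
  have "orbit_of (Y_map q) x = orbit_of (Y_map p) x" if "x \<noteq> inv (fst p) 1" for x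
    using it[OF that] by (simp add: orbit_of_def)
  then have "orbit_of (Y_map q) ` (UNIV - {inv (fst p) 1}) = orbit_of (Y_map p) ` (UNIV - {inv (fst p) 1})"
    by (auto intro: image_cong)
  then show ?thesis unfolding P_inv_def assms(1) by simp
qed

lemma P_rm0: "W p \<Longrightarrow> P_inv (rauzy_move 0 p) = P_inv p"
  using rm0[of p] unfolding P_inv_def by simp

lemma P_lm0: "W p \<Longrightarrow> P_inv (left_rauzy_move 0 p) = P_inv p"
  using lm0[of p] Y_facts(1)[of p] by (intro P_congr) auto

lemma step_inv:
  fixes q r :: "('a::finite) rpair"
  assumes W: "W q" and st: "rauzy_step q r"
  shows "W r \<and> P_inv r = P_inv q"
proof -
  have Ws: "W (sw q)" using W_sw[OF W] .
  from st obtain e where e: "e = 0 \<or> e = 1" and r: "r = rauzy_move e q \<or> r = left_rauzy_move e q"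
    unfolding rauzy_step_def by auto
  from e r show ?thesis
  proof (elim disjE)
    assume "e = 0" "r = rauzy_move e q" then show ?thesis using rm0(2)[OF W] P_rm0[OF W] by simp
  next
    assume "e = 0" "r = left_rauzy_move e q" then show ?thesis using lm0(2)[OF W] P_lm0[OF W] by simp
  next
    assume "e = 1" "r = rauzy_move e q"
    then have r: "r = sw (rauzy_move 0 (sw q))" using rm1_sw by simp
    have W2: "W (rauzy_move 0 (sw q))" using rm0(2)[OF Ws] .
    show ?thesis using W_sw[OF W2] P_sw[OF W2] P_rm0[OF Ws] P_sw[OF W] r by simp
  next
    assume "e = 1" "r = left_rauzy_move e q"
    then have r: "r = sw (left_rauzy_move 0 (sw q))" using lm1_sw by simp
    have W2: "W (left_rauzy_move 0 (sw q))" using lm0(2)[OF Ws] .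
    show ?thesis using W_sw[OF W2] P_sw[OF W2] P_lm0[OF Ws] P_sw[OF W] r by simp
  qed
qed

lemma irr_W:
  fixes p :: "('a::finite) rpair"
  assumes "is_pair p" "irreducible p" "2 \<le> CARD('a)"
  shows "W p"
proof -
  obtain p0 p1 where p: "p = (p0, p1)" by fastforce
  define n where "n = CARD('a)"
  have b0: "bij_betw p0 UNIV {1..n}" and b1: "bij_betw p1 UNIV {1..n}"
    using assms by (auto simp: is_pair_def p n_def)
  note f0 = bijF[OF b0[unfolded n_def]] and f1 = bijF[OF b1[unfolded n_def]]
  have irr: "p0 -` {1..k} \<noteq> p1 -` {1..k}" if "1 \<le> k" "k < n" for k
    using assms(2) that by (simp add: irreducible_def p n_def)
  have pre1: "p0 -` {1..1} = {inv p0 1}" "p1 -` {1..1} = {inv p1 1}"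
  proof -
    have "p0 x = 1 \<longleftrightarrow> x = inv p0 1" for x using f0(4)[of 1] f0(5)[of x] assms(3) n_def by auto
    then show "p0 -` {1..1} = {inv p0 1}" by auto
    have "p1 x = 1 \<longleftrightarrow> x = inv p1 1" for x using f1(4)[of 1] f1(5)[of x] assms(3) n_def by auto
    then show "p1 -` {1..1} = {inv p1 1}" by auto
  qed
  have "inv p0 1 \<noteq> inv p1 1" using irr[of 1] pre1 assms(3) n_def by auto
  moreover have "inv p0 n \<noteq> inv p1 n"
  proof
    assume e: "inv p0 n = inv p1 n"
    have "p0 -` {1..n-1} = UNIV - {inv p0 n}"
    proof -
      have "p0 x \<in> {1..n-1} \<longleftrightarrow> x \<noteq> inv p0 n" for x
      proof
        assume "p0 x \<in> {1..n-1}"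
        then show "x \<noteq> inv p0 n" using f0(4)[of n] assms(3) n_def by auto
      next
        assume "x \<noteq> inv p0 n"
        then have "p0 x \<noteq> n" using f0(5)[of x] by auto
        then show "p0 x \<in> {1..n-1}" using f0(2)[of x] f0(3)[of x] n_def by auto
      qed
      then show ?thesis by (simp add: set_eq_iff)
    qed
    moreover have "p1 -` {1..n-1} = UNIV - {inv p1 n}"
    proof -
      have "p1 x \<in> {1..n-1} \<longleftrightarrow> x \<noteq> inv p1 n" for x
      proof
        assume "p1 x \<in> {1..n-1}"
        then show "x \<noteq> inv p1 n" using f1(4)[of n] assms(3) n_def by auto
      next
        assume "x \<noteq> inv p1 n"
        then have "p1 x \<noteq> n" using f1(5)[of x] by auto
        then show "p1 x \<in> {1..n-1}" using f1(2)[of x] f1(3)[of x] n_def by auto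
      qed
      then show ?thesis by (simp add: set_eq_iff)
    qed
    moreover have "p0 -` {1..n-1} \<noteq> p1 -` {1..n-1}" using irr[of "n-1"] assms(3) n_def by simp
    ultimately show False using e by simp
  qed
  ultimately show ?thesis using assms(1) by (simp add: W_def p n_def)
qed

theorem proposition2p14:
  fixes p q :: "('a::finite) rpair"
  assumes "is_pair p" and "irreducible p"
    and "q \<in> labeled_extended_rauzy_class p"
  shows "P_inv q = P_inv p"
proof (cases "CARD('a) = 1")
  case True
  have e: "UNIV - {x} = ({} :: 'a set)" for x
  proof -
    have "card (UNIV :: 'a set) = 1" using True by simp
    then obtain y :: 'a where "UNIV = {y}" using card_1_singletonE by blast
    moreover from this have "x = y" by (metis UNIV_I singletonD)
    ultimately show ?thesis by simp
  qed
  show ?thesis unfolding P_inv_def e by simp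
next
  case False
  have "CARD('a) \<noteq> 0" by simp
  with False have c2: "2 \<le> CARD('a)" by linarith
  have W: "W p" using irr_W[OF assms(1,2) c2] .
  have "rauzy_step\<^sup>*\<^sup>* p q" using assms(3) by (simp add: labeled_extended_rauzy_class_def)
  then have "W q \<and> P_inv q = P_inv p"
  proof (induction rule: rtranclp_induct)
    case base then show ?case using W by simp
  next
    case (step y z) then show ?case using step_inv[of y z] by simp
  qed
  then show ?thesis by simp
qed

end
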